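(* Let $\Gamma=K_{r,t}$ be the complete bipartite graph with parts of sizes $r$ and $t$, where $t\le r$. For every integer $k\in\{2-r,\dots,r\}$: (a) if $k\ge t+1$, then $\gamma_k^o(\Gamma)=r$; (b) if $k\le t$ and $\left\lceil\frac{r+k}{2}\right\rceil+\left\lceil\frac{t+k}{2}\right\rceil\ge t$, then $\gamma_k^o(\Gamma)=t$; (c) if $-t<k\le t$ and $\left\lceil\frac{r+k}{2}\right\rceil+\left\lceil\frac{t+k}{2}\right\rceil< t$, then $\gamma_k^o(\Gamma)=\left\lceil\frac{r+k}{2}\right\rceil+\left\lceil\frac{t+k}{2}\right\rceil$; (d) if $k\le -t$ and $\left\lceil\frac{r+k}{2}\right\rceil+\left\lceil\frac{t+k}{2}\right\rceil< t$, then $\gamma_k^o(\Gamma)=\min\{t,1+\left\lceil\frac{r+k}{2}\right\rceil\}$.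
   Context: Graphs are finite and simple. For a graph $\Gamma=(V,E)$, $S\subseteq V$ and $v\in V$, $\delta_S(v)$ denotes the number of neighbours of $v$ in $S$, $\overline{S}=V\setminus S$, and $\partial(S)$ is the set of vertices of $\overline{S}$ having at least one neighbour in $S$. For an integer $k$, a nonempty set $S\subseteq V$ is an offensive $k$-alliance if $\delta_S(v)\ge\delta_{\overline{S}}(v)+k$ for every $v\in\partial(S)$. It is a global offensive $k$-alliance if moreover it is a dominating set (every vertex of $\overline{S}$ has a neighbour in $S$). $\gamma_k^o(\Gamma)$ denotes the minimum cardinality of a global offensive $k$-alliance in $\Gamma$. *)

theory Defs
  imports Complex_Main
begin

definition simple_graph :: "'a set \<Rightarrow> ('a \<Rightarrow> 'a \<Rightarrow> bool) \<Rightarrow> bool" where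
  "simple_graph V E \<longleftrightarrow> finite V \<and> (\<forall>u v. E u v \<longrightarrow> u \<in> V \<and> v \<in> V)
     \<and> (\<forall>u v. E u v \<longrightarrow> E v u) \<and> (\<forall>v. \<not> E v v)"

definition delta :: "('a \<Rightarrow> 'a \<Rightarrow> bool) \<Rightarrow> 'a set \<Rightarrow> 'a \<Rightarrow> nat" where
  "delta E S v = card {u \<in> S. E v u}"

definition boundary :: "'a set \<Rightarrow> ('a \<Rightarrow> 'a \<Rightarrow> bool) \<Rightarrow> 'a set \<Rightarrow> 'a set" where
  "boundary V E S = {v \<in> V - S. \<exists>u\<in>S. E v u}"

definition offensive_alliance :: "'a set \<Rightarrow> ('a \<Rightarrow> 'a \<Rightarrow> bool) \<Rightarrow> int \<Rightarrow> 'a set \<Rightarrow> bool" where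
  "offensive_alliance V E k S \<longleftrightarrow> S \<subseteq> V \<and> S \<noteq> {} \<and>
     (\<forall>v \<in> boundary V E S. int (delta E S v) \<ge> int (delta E (V - S) v) + k)"

definition dominating :: "'a set \<Rightarrow> ('a \<Rightarrow> 'a \<Rightarrow> bool) \<Rightarrow> 'a set \<Rightarrow> bool" where
  "dominating V E S \<longleftrightarrow> S \<subseteq> V \<and> (\<forall>v \<in> V - S. \<exists>u\<in>S. E v u)"

definition global_offensive_alliance :: "'a set \<Rightarrow> ('a \<Rightarrow> 'a \<Rightarrow> bool) \<Rightarrow> int \<Rightarrow> 'a set \<Rightarrow> bool" where
  "global_offensive_alliance V E k S \<longleftrightarrow> offensive_alliance V E k S \<and> dominating V E S"

definition gamma_o :: "'a set \<Rightarrow> ('a \<Rightarrow> 'a \<Rightarrow> bool) \<Rightarrow> int \<Rightarrow> nat" where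
  "gamma_o V E k = Min (card ` {S. global_offensive_alliance V E k S})"

definition Kbip_V :: "nat \<Rightarrow> nat \<Rightarrow> (nat + nat) set" where
  "Kbip_V r t = Inl ` {..<r} \<union> Inr ` {..<t}"

definition Kbip_E :: "nat \<Rightarrow> nat \<Rightarrow> (nat + nat) \<Rightarrow> (nat + nat) \<Rightarrow> bool" where
  "Kbip_E r t x y \<longleftrightarrow> x \<in> Kbip_V r t \<and> y \<in> Kbip_V r t \<and>
     ((isl x \<and> \<not> isl y) \<or> (\<not> isl x \<and> isl y))"

end

theory Submission
  imports Defs
begin

lemma KA: "v \<in> Inl ` {..<r} \<Longrightarrow> {u\<in>X. Kbip_E r t v u} = X \<inter> Inr ` {..<t}"
  unfolding Kbip_E_def Kbip_V_def by auto

lemma KB: "v \<in> Inr ` {..<t} \<Longrightarrow> {u\<in>X. Kbip_E r t v u} = X \<inter> Inl ` {..<r}"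
  unfolding Kbip_E_def Kbip_V_def by auto

lemma ex_nb: "(\<exists>u\<in>S. E v u) \<longleftrightarrow> {u\<in>S. E v u} \<noteq> {}" by auto

lemma char:
  fixes S :: "(nat + nat) set" and r t :: nat and k :: int
  defines "A \<equiv> Inl ` {..<r} :: (nat+nat) set" and "B \<equiv> Inr ` {..<t} :: (nat+nat) set"
  defines "a \<equiv> card (S \<inter> A)" and "b \<equiv> card (S \<inter> B)"
  shows "global_offensive_alliance (Kbip_V r t) (Kbip_E r t) k S \<longleftrightarrow>
    S \<subseteq> Kbip_V r t \<and> a + b \<ge> 1 \<and>
    (a < r \<longrightarrow> b \<ge> 1 \<and> 2 * int b \<ge> int t + k) \<and>
    (b < t \<longrightarrow> a \<ge> 1 \<and> 2 * int a \<ge> int r + k)"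
proof -
  have V: "Kbip_V r t = A \<union> B" unfolding Kbip_V_def A_def B_def by simp
  have fA: "finite A" and fB: "finite B" unfolding A_def B_def by auto
  have cA: "card A = r" unfolding A_def by (simp add: card_image)
  have cB: "card B = t" unfolding B_def by (simp add: card_image)
  have dAB: "A \<inter> B = {}" unfolding A_def B_def by auto
  have ab_le: "a \<le> r" "b \<le> t" unfolding a_def b_def using cA cB fA fB
    by (auto intro: card_mono)
  have cBS: "card (B - S) = t - b"
  proof -
    have "B - S = B - (S \<inter> B)" by auto
    thus ?thesis using card_Diff_subset[of "S \<inter> B" B] fB cB b_def
      by (metis Int_lower2 finite_Int)
  qed
  have cAS: "card (A - S) = r - a"
  proof -
    have "A - S = A - (S \<inter> A)" by auto
    thus ?thesis using card_Diff_subset[of "S \<inter> A" A] fA cA a_def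
      by (metis Int_lower2 finite_Int)
  qed
  have AS: "A - S \<noteq> {} \<longleftrightarrow> a < r" using cAS fA ab_le
    by (metis card_0_eq diff_is_0_eq finite_Diff not_less card.empty diff_zero gr0I zero_less_diff)
  have BS: "B - S \<noteq> {} \<longleftrightarrow> b < t" using cBS fB ab_le
    by (metis card_0_eq diff_is_0_eq finite_Diff not_less card.empty diff_zero gr0I zero_less_diff)
  have VSB: "(Kbip_V r t - S) \<inter> B = B - S" using V dAB by auto
  have VSA: "(Kbip_V r t - S) \<inter> A = A - S" using V dAB by auto
  have SB0: "S \<inter> B \<noteq> {} \<longleftrightarrow> b \<ge> 1" using fB b_def
    by (metis One_nat_def Suc_leI card_gt_0_iff finite_Int not_one_le_zero card.empty)
  have SA0: "S \<inter> A \<noteq> {} \<longleftrightarrow> a \<ge> 1" using fA a_def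
    by (metis One_nat_def Suc_leI card_gt_0_iff finite_Int not_one_le_zero card.empty)
  have cS: "S \<subseteq> Kbip_V r t \<Longrightarrow> S \<noteq> {} \<longleftrightarrow> a + b \<ge> 1" using SA0 SB0 V by auto
  have vA: "v \<in> A - S \<Longrightarrow> (v \<in> boundary (Kbip_V r t) (Kbip_E r t) S \<longrightarrow>
       int (delta (Kbip_E r t) S v) \<ge> int (delta (Kbip_E r t) (Kbip_V r t - S) v) + k)
       \<and> (\<exists>u\<in>S. Kbip_E r t v u)
     \<longleftrightarrow> b \<ge> 1 \<and> 2 * int b \<ge> int t + k" for v
  proof -
    assume v: "v \<in> A - S"
    have vV: "v \<in> Kbip_V r t - S" using v V by auto
    have n1: "{u\<in>S. Kbip_E r t v u} = S \<inter> B" using KA v A_def B_def by auto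
    have n2: "{u\<in>Kbip_V r t - S. Kbip_E r t v u} = B - S" using KA[of v r "Kbip_V r t - S" t] v A_def B_def VSB by auto
    have ex: "(\<exists>u\<in>S. Kbip_E r t v u) \<longleftrightarrow> b \<ge> 1" using n1 SB0 ex_nb by metis
    have bd: "v \<in> boundary (Kbip_V r t) (Kbip_E r t) S \<longleftrightarrow> b \<ge> 1"
      using vV ex unfolding boundary_def by auto
    show ?thesis using bd ex n1 n2 cBS ab_le b_def unfolding delta_def by auto
  qed
  have vB: "v \<in> B - S \<Longrightarrow> (v \<in> boundary (Kbip_V r t) (Kbip_E r t) S \<longrightarrow>
       int (delta (Kbip_E r t) S v) \<ge> int (delta (Kbip_E r t) (Kbip_V r t - S) v) + k)
       \<and> (\<exists>u\<in>S. Kbip_E r t v u)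
     \<longleftrightarrow> a \<ge> 1 \<and> 2 * int a \<ge> int r + k" for v
  proof -
    assume v: "v \<in> B - S"
    have vV: "v \<in> Kbip_V r t - S" using v V by auto
    have n1: "{u\<in>S. Kbip_E r t v u} = S \<inter> A" using KB v A_def B_def by auto
    have n2: "{u\<in>Kbip_V r t - S. Kbip_E r t v u} = A - S" using KB[of v t "Kbip_V r t - S" r] v A_def B_def VSA by auto
    have ex: "(\<exists>u\<in>S. Kbip_E r t v u) \<longleftrightarrow> a \<ge> 1" using n1 SA0 ex_nb by metis
    have bd: "v \<in> boundary (Kbip_V r t) (Kbip_E r t) S \<longleftrightarrow> a \<ge> 1"
      using vV ex unfolding boundary_def by auto
    show ?thesis using bd ex n1 n2 cAS ab_le a_def unfolding delta_def by auto
  qed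
  have bsub: "boundary (Kbip_V r t) (Kbip_E r t) S \<subseteq> Kbip_V r t - S"
    unfolding boundary_def by auto
  have split: "Kbip_V r t - S = (A - S) \<union> (B - S)" using V by auto
  show ?thesis
  proof
    assume g: "global_offensive_alliance (Kbip_V r t) (Kbip_E r t) k S"
    hence sub: "S \<subseteq> Kbip_V r t" and ne: "S \<noteq> {}"
      and off: "\<forall>v\<in>boundary (Kbip_V r t) (Kbip_E r t) S.
         int (delta (Kbip_E r t) S v) \<ge> int (delta (Kbip_E r t) (Kbip_V r t - S) v) + k"
      and dom: "\<forall>v\<in>Kbip_V r t - S. \<exists>u\<in>S. Kbip_E r t v u"
      unfolding global_offensive_alliance_def offensive_alliance_def dominating_def by auto
    have 1: "a < r \<longrightarrow> b \<ge> 1 \<and> 2 * int b \<ge> int t + k"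
    proof
      assume "a < r"
      then obtain v where v: "v \<in> A - S" using AS by auto
      show "b \<ge> 1 \<and> 2 * int b \<ge> int t + k" using vA[OF v] off dom v split by auto
    qed
    have 2: "b < t \<longrightarrow> a \<ge> 1 \<and> 2 * int a \<ge> int r + k"
    proof
      assume "b < t"
      then obtain v where v: "v \<in> B - S" using BS by auto
      show "a \<ge> 1 \<and> 2 * int a \<ge> int r + k" using vB[OF v] off dom v split by auto
    qed
    show "S \<subseteq> Kbip_V r t \<and> a + b \<ge> 1 \<and>
    (a < r \<longrightarrow> b \<ge> 1 \<and> 2 * int b \<ge> int t + k) \<and>
    (b < t \<longrightarrow> a \<ge> 1 \<and> 2 * int a \<ge> int r + k)" using 1 2 sub ne cS by auto
  next
    assume h: "S \<subseteq> Kbip_V r t \<and> a + b \<ge> 1 \<and>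
    (a < r \<longrightarrow> b \<ge> 1 \<and> 2 * int b \<ge> int t + k) \<and>
    (b < t \<longrightarrow> a \<ge> 1 \<and> 2 * int a \<ge> int r + k)"
    have allv: "\<And>v. v \<in> Kbip_V r t - S \<Longrightarrow> (v \<in> boundary (Kbip_V r t) (Kbip_E r t) S \<longrightarrow>
       int (delta (Kbip_E r t) S v) \<ge> int (delta (Kbip_E r t) (Kbip_V r t - S) v) + k)
       \<and> (\<exists>u\<in>S. Kbip_E r t v u)"
    proof -
      fix v assume "v \<in> Kbip_V r t - S"
      hence "v \<in> A - S \<or> v \<in> B - S" using split by auto
      thus "(v \<in> boundary (Kbip_V r t) (Kbip_E r t) S \<longrightarrow>
       int (delta (Kbip_E r t) S v) \<ge> int (delta (Kbip_E r t) (Kbip_V r t - S) v) + k)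
       \<and> (\<exists>u\<in>S. Kbip_E r t v u)"
      proof
        assume v: "v \<in> A - S" hence "a < r" using AS by auto
        thus ?thesis using vA[OF v] h by auto
      next
        assume v: "v \<in> B - S" hence "b < t" using BS by auto
        thus ?thesis using vB[OF v] h by auto
      qed
    qed
    show "global_offensive_alliance (Kbip_V r t) (Kbip_E r t) k S"
      unfolding global_offensive_alliance_def offensive_alliance_def dominating_def
      using h cS allv bsub by blast
  qed
qed


definition P :: "nat \<Rightarrow> nat \<Rightarrow> int \<Rightarrow> nat \<Rightarrow> nat \<Rightarrow> bool" where
  "P r t k a b \<longleftrightarrow> a + b \<ge> 1 \<and>
    (a < r \<longrightarrow> b \<ge> 1 \<and> 2 * int b \<ge> int t + k) \<and>
    (b < t \<longrightarrow> a \<ge> 1 \<and> 2 * int a \<ge> int r + k)"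

lemma parts:
  fixes S :: "(nat + nat) set" and r t :: nat
  assumes "S \<subseteq> Kbip_V r t"
  shows "card S = card (S \<inter> Inl ` {..<r}) + card (S \<inter> Inr ` {..<t})"
    "card (S \<inter> Inl ` {..<r}) \<le> r" "card (S \<inter> Inr ` {..<t}) \<le> t"
proof -
  have "S = (S \<inter> Inl ` {..<r}) \<union> (S \<inter> Inr ` {..<t})" using assms unfolding Kbip_V_def by auto
  moreover have "(S \<inter> Inl ` {..<r}) \<inter> (S \<inter> Inr ` {..<t}) = {}" by auto
  ultimately show "card S = card (S \<inter> Inl ` {..<r}) + card (S \<inter> Inr ` {..<t})"
    by (metis card_Un_disjoint finite_Int finite_imageI finite_lessThan)
  show "card (S \<inter> Inl ` {..<r}) \<le> r"
    by (metis card_image card_lessThan card_mono finite_imageI finite_lessThan inf_le2 inj_Inl inj_on_subset subset_UNIV)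
  show "card (S \<inter> Inr ` {..<t}) \<le> t"
    by (metis card_image card_lessThan card_mono finite_imageI finite_lessThan inf_le2 inj_Inr inj_on_subset subset_UNIV)
qed

lemma witness:
  fixes a b r t :: nat
  assumes "a \<le> r" "b \<le> t"
  defines "S \<equiv> Inl ` {..<a} \<union> Inr ` {..<b} :: (nat+nat) set"
  shows "S \<subseteq> Kbip_V r t" "card (S \<inter> Inl ` {..<r}) = a" "card (S \<inter> Inr ` {..<t}) = b"
proof -
  show "S \<subseteq> Kbip_V r t" using assms unfolding S_def Kbip_V_def by auto
  have "S \<inter> Inl ` {..<r} = Inl ` {..<a}" using assms unfolding S_def by auto
  thus "card (S \<inter> Inl ` {..<r}) = a" by (simp add: card_image)
  have "S \<inter> Inr ` {..<t} = Inr ` {..<b}" using assms unfolding S_def by auto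
  thus "card (S \<inter> Inr ` {..<t}) = b" by (simp add: card_image)
qed

lemma gamma_int:
  fixes r t :: nat and k m :: int
  assumes ex: "\<exists>a b. a \<le> r \<and> b \<le> t \<and> P r t k a b \<and> int a + int b = m"
  and lb: "\<forall>a b. a \<le> r \<longrightarrow> b \<le> t \<longrightarrow> P r t k a b \<longrightarrow> m \<le> int a + int b"
  shows "int (gamma_o (Kbip_V r t) (Kbip_E r t) k) = m"
proof -
  obtain a b where ab: "a \<le> r" "b \<le> t" "P r t k a b" "int a + int b = m" using ex by blast
  define S where "S \<equiv> Inl ` {..<a} \<union> Inr ` {..<b} :: (nat+nat) set"
  note w = witness[OF ab(1,2), folded S_def]
  have gS: "global_offensive_alliance (Kbip_V r t) (Kbip_E r t) k S"
    using char[where S=S and k=k and r=r and t=t] w ab(3) unfolding P_def by simp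
  have cS: "card S = a + b" using parts(1)[OF w(1)] w by simp
  define C where "C = card ` {S. global_offensive_alliance (Kbip_V r t) (Kbip_E r t) k S}"
  have "{S. global_offensive_alliance (Kbip_V r t) (Kbip_E r t) k S} \<subseteq> Pow (Kbip_V r t)"
    unfolding global_offensive_alliance_def dominating_def by auto
  moreover have "finite (Kbip_V r t)" unfolding Kbip_V_def by auto
  ultimately have fC: "finite C" unfolding C_def by (meson finite_Pow_iff finite_imageI finite_subset)
  have inC: "a + b \<in> C" unfolding C_def using gS cS by force
  have allC: "\<forall>y\<in>C. a + b \<le> y"
  proof
    fix y assume "y \<in> C"
    then obtain T where T: "global_offensive_alliance (Kbip_V r t) (Kbip_E r t) k T" "y = card T"
      unfolding C_def by auto
    have sub: "T \<subseteq> Kbip_V r t" using T(1) unfolding global_offensive_alliance_def dominating_def by auto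
    have "P r t k (card (T \<inter> Inl ` {..<r})) (card (T \<inter> Inr ` {..<t}))"
      using char[where S=T and k=k and r=r and t=t] T(1) unfolding P_def by simp
    hence "m \<le> int (card (T \<inter> Inl ` {..<r})) + int (card (T \<inter> Inr ` {..<t}))"
      using lb parts[OF sub] by blast
    thus "a + b \<le> y" using parts(1)[OF sub] T(2) ab(4) by simp
  qed
  have "Min C = a + b" using Min_eqI[OF fC] allC inC by blast
  thus ?thesis unfolding gamma_o_def C_def[symmetric] using ab(4) by simp
qed

lemma ceil_half:
  fixes n :: int
  shows "n \<le> 2 * \<lceil>real_of_int n / 2\<rceil>" "2 * \<lceil>real_of_int n / 2\<rceil> \<le> n + 1"
proof -
  have 1: "real_of_int n / 2 \<le> of_int \<lceil>real_of_int n / 2\<rceil>" by (rule le_of_int_ceiling)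
  have 2: "of_int \<lceil>real_of_int n / 2\<rceil> < real_of_int n / 2 + 1" using ceiling_correct[of "real_of_int n / 2"] by linarith
  from 1 have "real_of_int n \<le> real_of_int (2 * \<lceil>real_of_int n / 2\<rceil>)" by (simp, linarith)
  thus "n \<le> 2 * \<lceil>real_of_int n / 2\<rceil>" by linarith
  from 2 have "real_of_int (2 * \<lceil>real_of_int n / 2\<rceil>) < real_of_int (n + 2)" by simp
  hence "2 * \<lceil>real_of_int n / 2\<rceil> < n + 2" by linarith
  thus "2 * \<lceil>real_of_int n / 2\<rceil> \<le> n + 1" by simp
qed

theorem mainTheorem1:
  fixes r t :: nat and k :: int
  assumes "1 \<le> t" and "t \<le> r"
    and "2 - int r \<le> k" and "k \<le> int r"
  defines "c \<equiv> \<lceil>real_of_int (int r + k) / 2\<rceil> + \<lceil>real_of_int (int t + k) / 2\<rceil>"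
  shows "(k \<ge> int t + 1 \<longrightarrow> gamma_o (Kbip_V r t) (Kbip_E r t) k = r)
    \<and> (k \<le> int t \<and> c \<ge> int t \<longrightarrow> gamma_o (Kbip_V r t) (Kbip_E r t) k = t)
    \<and> (- int t < k \<and> k \<le> int t \<and> c < int t \<longrightarrow>
         int (gamma_o (Kbip_V r t) (Kbip_E r t) k) = c)
    \<and> (k \<le> - int t \<and> c < int t \<longrightarrow>
         int (gamma_o (Kbip_V r t) (Kbip_E r t) k)
           = min (int t) (1 + \<lceil>real_of_int (int r + k) / 2\<rceil>))"
proof -
  define \<alpha> where "\<alpha> = \<lceil>real_of_int (int r + k) / 2\<rceil>"
  define \<beta> where "\<beta> = \<lceil>real_of_int (int t + k) / 2\<rceil>"
  have al: "int r + k \<le> 2 * \<alpha>" "2 * \<alpha> \<le> int r + k + 1" unfolding \<alpha>_def using ceil_half[of "int r + k"] by auto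
  have be: "int t + k \<le> 2 * \<beta>" "2 * \<beta> \<le> int t + k + 1" unfolding \<beta>_def using ceil_half[of "int t + k"] by auto
  have al2: "\<And>x::int. int r + k \<le> 2 * x \<Longrightarrow> \<alpha> \<le> x" using al by linarith
  have be2: "\<And>x::int. int t + k \<le> 2 * x \<Longrightarrow> \<beta> \<le> x" using be by linarith
  have c: "c = \<alpha> + \<beta>" unfolding c_def \<alpha>_def \<beta>_def by simp
  have A: "gamma_o (Kbip_V r t) (Kbip_E r t) k = r" if h: "k \<ge> int t + 1"
  proof -
    have "int (gamma_o (Kbip_V r t) (Kbip_E r t) k) = int r"
    proof (rule gamma_int)
      show "\<exists>a b. a \<le> r \<and> b \<le> t \<and> P r t k a b \<and> int a + int b = int r"
        by (rule exI[of _ r], rule exI[of _ 0]) (use assms(1-4) h in \<open>auto simp: P_def\<close>)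
      show "\<forall>a b. a \<le> r \<longrightarrow> b \<le> t \<longrightarrow> P r t k a b \<longrightarrow> int r \<le> int a + int b"
        using assms(1-4) h unfolding P_def by (auto simp: not_less) 
    qed
    thus ?thesis by simp
  qed
  have B: "gamma_o (Kbip_V r t) (Kbip_E r t) k = t" if h: "k \<le> int t" "c \<ge> int t"
  proof -
    have "int (gamma_o (Kbip_V r t) (Kbip_E r t) k) = int t"
    proof (rule gamma_int)
      show "\<exists>a b. a \<le> r \<and> b \<le> t \<and> P r t k a b \<and> int a + int b = int t"
        by (rule exI[of _ 0], rule exI[of _ t]) (use assms(1-4) h in \<open>auto simp: P_def\<close>)
      show "\<forall>a b. a \<le> r \<longrightarrow> b \<le> t \<longrightarrow> P r t k a b \<longrightarrow> int t \<le> int a + int b"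
        using assms(1-4) h al be c unfolding P_def by (auto simp: not_less dest!: al2 be2)
    qed
    thus ?thesis by simp
  qed
  have C: "int (gamma_o (Kbip_V r t) (Kbip_E r t) k) = c" if h: "- int t < k" "k \<le> int t" "c < int t"
  proof (rule gamma_int)
    have "\<alpha> \<ge> 1" "\<beta> \<ge> 1" using al be assms h by auto
    show "\<exists>a b. a \<le> r \<and> b \<le> t \<and> P r t k a b \<and> int a + int b = c"
      by (rule exI[of _ "nat \<alpha>"], rule exI[of _ "nat \<beta>"])
        (use assms(1-4) h al be c \<open>\<alpha> \<ge> 1\<close> \<open>\<beta> \<ge> 1\<close> in \<open>auto simp: P_def\<close>)
    show "\<forall>a b. a \<le> r \<longrightarrow> b \<le> t \<longrightarrow> P r t k a b \<longrightarrow> c \<le> int a + int b"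
      using assms(1-4) h al be c unfolding P_def by (auto simp: not_less dest!: al2 be2)
  qed
  have D: "int (gamma_o (Kbip_V r t) (Kbip_E r t) k) = min (int t) (1 + \<alpha>)"
    if h: "k \<le> - int t" "c < int t"
  proof (rule gamma_int)
    have "\<alpha> \<ge> 1" using al assms(1-4) by auto
    show "\<exists>a b. a \<le> r \<and> b \<le> t \<and> P r t k a b \<and> int a + int b = min (int t) (1 + \<alpha>)"
    proof (cases "int t \<le> 1 + \<alpha>")
      case True
      show ?thesis
        by (rule exI[of _ 0], rule exI[of _ t]) (use assms(1-4) h True in \<open>auto simp: P_def\<close>)
    next
      case False
      show ?thesis
        by (rule exI[of _ "nat \<alpha>"], rule exI[of _ 1])
          (use assms(1-4) h al be c False \<open>\<alpha> \<ge> 1\<close> in \<open>auto simp: P_def\<close>)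
    qed
    show "\<forall>a b. a \<le> r \<longrightarrow> b \<le> t \<longrightarrow> P r t k a b \<longrightarrow> min (int t) (1 + \<alpha>) \<le> int a + int b"
      using assms(1-4) h al be c unfolding P_def by (auto simp: not_less dest!: al2 be2)
  qed
  show ?thesis using A B C D unfolding \<alpha>_def by blast
qed

end
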